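(* Let $P\subset\mathbb R^d$ be a $d$-polytope, $d\geq 3$, $S$ a simplex facet of $P$ in bounded position, $\mathcal F\subseteq\operatorname{adj}(S)$ nonsimple, and $G$ a subridge ($(d-3)$-face) of $P$ with $G\subseteq S$. Let $\varphi=|\{F\in\mathcal F: G\subseteq F\}|$, $v\in V_S(\mathcal F,\emptyset;P)$ and $Q=\operatorname{conv}(P\cup\{v\})$. Then $0\leq\varphi\leq 2$, $G$ is a face of $Q$, and $\operatorname{fdeg}_Q(G)=\operatorname{fdeg}_P(G)+1-\varphi$.
   Context: For a face $G$ of a polytope $X$, $\operatorname{fdeg}_X(G)$ is the number of facets of $X$ containing $G$. For a facet $F$ of $P$ let $H_F=\{x:\langle x,a_F\rangle=\ell_F\}$ be its affine hull, oriented so that $P\subseteq\{x:\langle x,a_F\rangle\geq\ell_F\}$; $H_F^+$, $H_F^-$ are the open sides $\{>\}$, $\{<\}$. Two facets are adjacent if they share a ridge; $\operatorname{adj}(S)$ is the set of facets adjacent to $S$. A simplex facet is a facet combinatorially equivalent to a $(d-1)$-simplex. $S$ is in bounded position if for every set of $d$ facets in $\operatorname{adj}(S)$ their hyperplanes meet in a point of $H_S^-$. $\mathcal F\subseteq\operatorname{adj}(S)$ is nonsimple if there is no pair of adjacent facets $G,G'\in\mathcal F$ having a common $(d-3)$-face with $S$. $V_S(\mathcal F,\mathcal N;P)$ is the set of points lying in $H_F^-$ for $F\in\mathcal N\cup\{S\}$, in $H_F$ for $F\in\mathcal F$, and in $H_F^+$ for all other facets $F$ of $P$. *)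

theory Defs
  imports "HOL-Analysis.Analysis"
begin

definition d_polytope :: "'a::euclidean_space set \<Rightarrow> bool" where
  "d_polytope P \<longleftrightarrow> polytope P \<and> aff_dim P = int DIM('a)"

definition fdeg :: "'a::euclidean_space set \<Rightarrow> 'a set \<Rightarrow> nat" where
  "fdeg X G = card {F. F facet_of X \<and> G \<subseteq> F}"

definition hyp :: "'a::euclidean_space set \<Rightarrow> 'a set" where
  "hyp F = affine hull F"

definition hplus :: "'a::euclidean_space set \<Rightarrow> 'a set \<Rightarrow> 'a set" where
  "hplus P F = {x. \<exists>a l. a \<noteq> 0 \<and> affine hull F = {y. a \<bullet> y = l}
                      \<and> P \<subseteq> {y. a \<bullet> y \<ge> l} \<and> a \<bullet> x > l}"

definition hminus :: "'a::euclidean_space set \<Rightarrow> 'a set \<Rightarrow> 'a set" where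
  "hminus P F = {x. \<exists>a l. a \<noteq> 0 \<and> affine hull F = {y. a \<bullet> y = l}
                      \<and> P \<subseteq> {y. a \<bullet> y \<ge> l} \<and> a \<bullet> x < l}"

definition adjacent :: "'a::euclidean_space set \<Rightarrow> 'a set \<Rightarrow> 'a set \<Rightarrow> bool" where
  "adjacent P F F' \<longleftrightarrow> F facet_of P \<and> F' facet_of P \<and> F \<noteq> F' \<and>
     (\<exists>R. R face_of P \<and> aff_dim R = int DIM('a) - 2 \<and> R \<subseteq> F \<inter> F')"

definition adj :: "'a::euclidean_space set \<Rightarrow> 'a set \<Rightarrow> 'a set set" where
  "adj P S = {F. adjacent P S F}"

definition comb_equiv :: "'a::euclidean_space set \<Rightarrow> 'a set \<Rightarrow> bool" where
  "comb_equiv X Y \<longleftrightarrow> (\<exists>f. bij_betw f {F. F face_of X} {F. F face_of Y} \<and>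
     (\<forall>F G. F face_of X \<longrightarrow> G face_of X \<longrightarrow> (F \<subseteq> G \<longleftrightarrow> f F \<subseteq> f G)))"

definition simplex_facet :: "'a::euclidean_space set \<Rightarrow> 'a set \<Rightarrow> bool" where
  "simplex_facet P S \<longleftrightarrow> S facet_of P \<and>
     (\<exists>T. (int DIM('a) - 1) simplex T \<and> comb_equiv S T)"

definition bounded_position :: "'a::euclidean_space set \<Rightarrow> 'a set \<Rightarrow> bool" where
  "bounded_position P S \<longleftrightarrow> (\<forall>\<G>. \<G> \<subseteq> adj P S \<and> card \<G> = DIM('a) \<longrightarrow>
      (\<exists>x. (\<Inter>F\<in>\<G>. hyp F) = {x} \<and> x \<in> hminus P S))"

definition nonsimple :: "'a::euclidean_space set \<Rightarrow> 'a set \<Rightarrow> 'a set set \<Rightarrow> bool" where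
  "nonsimple P S \<F> \<longleftrightarrow> \<F> \<subseteq> adj P S \<and>
     \<not> (\<exists>G\<in>\<F>. \<exists>G'\<in>\<F>. adjacent P G G' \<and>
          (\<exists>K. K face_of P \<and> aff_dim K = int DIM('a) - 3 \<and> K \<subseteq> G \<inter> G' \<inter> S))"

definition VS :: "'a::euclidean_space set \<Rightarrow> 'a set set \<Rightarrow> 'a set set \<Rightarrow> 'a set \<Rightarrow> 'a set" where
  "VS S \<F> \<N> P = {x. (\<forall>F\<in>\<N> \<union> {S}. x \<in> hminus P F) \<and> (\<forall>F\<in>\<F>. x \<in> hyp F) \<and>
      (\<forall>F. F facet_of P \<and> F \<notin> \<F> \<union> \<N> \<union> {S} \<longrightarrow> x \<in> hplus P F)}"

end

theory Submission
  imports Defs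
begin


lemma facet_subset_eq:
  fixes X :: "'a::euclidean_space set"
  assumes "F facet_of X" "F' facet_of X" "F \<subseteq> F'"
  shows "F = F'"
proof (rule ccontr)
  assume ne: "F \<noteq> F'"
  have "F face_of F'"
    using assms face_of_subset facet_of_imp_face_of facet_of_imp_subset by blast
  then have "aff_dim F < aff_dim F'"
    using face_of_aff_dim_lt[OF face_of_imp_convex[OF facet_of_imp_face_of[OF assms(2)]]] ne by blast
  moreover have "aff_dim F = aff_dim F'" using assms(1,2) unfolding facet_of_def by simp
  ultimately show False by simp
qed

lemma hyperplane_same:
  fixes a a' :: "'a::euclidean_space"
  assumes "a \<noteq> 0" "{x. a \<bullet> x = b} = {x. a' \<bullet> x = b'}"
  shows "\<exists>c. a' = c *\<^sub>R a \<and> b' = c * b"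
proof -
  define x0 where "x0 = (b / (a \<bullet> a)) *\<^sub>R a"
  have aa: "a \<bullet> a \<noteq> 0" using assms by simp
  have x0: "a \<bullet> x0 = b" using aa by (simp add: x0_def)
  then have x0': "a' \<bullet> x0 = b'" using assms(2) by blast
  have orth: "a' \<bullet> w = 0" if "a \<bullet> w = 0" for w
  proof -
    have "a \<bullet> (x0 + w) = b" using x0 that by (simp add: inner_add_right)
    then have "a' \<bullet> (x0 + w) = b'" using assms(2) by blast
    then show ?thesis using x0' by (simp add: inner_add_right)
  qed
  define c where "c = (a' \<bullet> a) / (a \<bullet> a)"
  define w where "w = a' - c *\<^sub>R a"
  have "a \<bullet> w = 0" using aa by (simp add: w_def c_def inner_diff_right inner_commute)
  then have "a' \<bullet> w = 0" by (rule orth)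
  then have "w \<bullet> w = 0" using \<open>a \<bullet> w = 0\<close> by (simp add: w_def inner_diff_left)
  then have "w = 0" by simp
  then have "a' = c *\<^sub>R a" by (simp add: w_def)
  moreover have "b' = c * b" using x0' x0 \<open>a' = c *\<^sub>R a\<close> by simp
  ultimately show ?thesis by blast
qed

lemma seg_lt:
  fixes P :: "'a::euclidean_space set"
  assumes "convex P" "P \<noteq> {}" "\<And>x. x \<in> P \<Longrightarrow> a \<bullet> x \<le> b" "a \<bullet> v < b"
  shows "convex hull (insert v P) \<inter> {x. a \<bullet> x = b} = P \<inter> {x. a \<bullet> x = b}"
proof
  show "convex hull (insert v P) \<inter> {x. a \<bullet> x = b} \<subseteq> P \<inter> {x. a \<bullet> x = b}"
  proof
    fix x assume x: "x \<in> convex hull (insert v P) \<inter> {x. a \<bullet> x = b}"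
    then obtain u w p where uw: "u \<ge> 0" "w \<ge> 0" "u + w = 1" "p \<in> P" "x = u *\<^sub>R v + w *\<^sub>R p"
      using convex_hull_insert[OF assms(2)] convex_hull_eq[of P] assms(1) by auto
    have "a \<bullet> x = u * (a \<bullet> v) + w * (a \<bullet> p)" using uw by (simp add: inner_add_right)
    moreover have "a \<bullet> p \<le> b" using assms(3) uw by blast
    moreover have "a \<bullet> x = b" using x by simp
    ultimately have e: "u * (a \<bullet> v - b) + w * (a \<bullet> p - b) = 0"
    proof -
      have "u * (a \<bullet> v - b) + w * (a \<bullet> p - b) = (u * (a \<bullet> v) + w * (a \<bullet> p)) - (u + w) * b"
        by (simp add: algebra_simps)
      also have "\<dots> = 0" using uw \<open>a \<bullet> x = b\<close> \<open>a \<bullet> x = u * (a \<bullet> v) + w * (a \<bullet> p)\<close> by simp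
      finally show ?thesis .
    qed
    have "w * (a \<bullet> p - b) \<le> 0" using uw \<open>a \<bullet> p \<le> b\<close> by (simp add: mult_nonneg_nonpos)
    moreover have "u * (a \<bullet> v - b) \<le> 0" using uw assms(4) by (simp add: mult_nonneg_nonpos)
    ultimately have "u * (a \<bullet> v - b) = 0" using e by linarith
    then have "u = 0" using assms(4) by simp
    then show "x \<in> P \<inter> {x. a \<bullet> x = b}" using uw x by simp
  qed
next
  show "P \<inter> {x. a \<bullet> x = b} \<subseteq> convex hull (insert v P) \<inter> {x. a \<bullet> x = b}"
    using hull_subset by fastforce
qed

lemma seg_eq:
  fixes P :: "'a::euclidean_space set"
  assumes "convex P" "P \<noteq> {}" "\<And>x. x \<in> P \<Longrightarrow> a \<bullet> x \<le> b" "a \<bullet> v = b"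
  shows "convex hull (insert v P) \<inter> {x. a \<bullet> x = b} = convex hull (insert v (P \<inter> {x. a \<bullet> x = b}))"
proof
  show "convex hull (insert v P) \<inter> {x. a \<bullet> x = b} \<subseteq> convex hull (insert v (P \<inter> {x. a \<bullet> x = b}))"
  proof
    fix x assume x: "x \<in> convex hull (insert v P) \<inter> {x. a \<bullet> x = b}"
    then obtain u w p where uw: "u \<ge> 0" "w \<ge> 0" "u + w = 1" "p \<in> P" "x = u *\<^sub>R v + w *\<^sub>R p"
      using convex_hull_insert[OF assms(2)] convex_hull_eq[of P] assms(1) by auto
    have "a \<bullet> x = u * (a \<bullet> v) + w * (a \<bullet> p)" using uw by (simp add: inner_add_right)
    moreover have "a \<bullet> p \<le> b" using assms(3) uw by blast
    moreover have "a \<bullet> x = b" using x by simp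
    ultimately have e: "u * (a \<bullet> v - b) + w * (a \<bullet> p - b) = 0"
    proof -
      have "u * (a \<bullet> v - b) + w * (a \<bullet> p - b) = (u * (a \<bullet> v) + w * (a \<bullet> p)) - (u + w) * b"
        by (simp add: algebra_simps)
      also have "\<dots> = 0" using uw \<open>a \<bullet> x = b\<close> \<open>a \<bullet> x = u * (a \<bullet> v) + w * (a \<bullet> p)\<close> by simp
      finally show ?thesis .
    qed
    then have "w * (a \<bullet> p - b) = 0" using assms(4) by simp
    then have "w = 0 \<or> a \<bullet> p = b" by simp
    then show "x \<in> convex hull (insert v (P \<inter> {x. a \<bullet> x = b}))"
    proof
      assume "w = 0" then have "x = v" using uw by simp
      then show ?thesis by (simp add: hull_inc)
    next
      assume "a \<bullet> p = b"
      then have p: "p \<in> convex hull (insert v (P \<inter> {x. a \<bullet> x = b}))" using uw by (simp add: hull_inc)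
      have vv: "v \<in> convex hull (insert v (P \<inter> {x. a \<bullet> x = b}))" by (simp add: hull_inc)
      show ?thesis using convexD[OF convex_convex_hull vv p, of u w] uw by simp
    qed
  qed
next
  have "convex hull (insert v (P \<inter> {x. a \<bullet> x = b})) \<subseteq> convex hull (insert v P)"
    by (rule hull_mono) blast
  moreover have "convex hull (insert v (P \<inter> {x. a \<bullet> x = b})) \<subseteq> {x. a \<bullet> x = b}"
    by (rule hull_minimal) (use assms(4) convex_hyperplane in auto)
  ultimately show "convex hull (insert v (P \<inter> {x. a \<bullet> x = b})) \<subseteq> convex hull (insert v P) \<inter> {x. a \<bullet> x = b}"
    by blast
qed

lemma Wgen:
  fixes X :: "'a::euclidean_space set" and T :: "'a set set"
  assumes fin: "finite T" and fac: "\<And>F. F \<in> T \<Longrightarrow> F facet_of X"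
    and nb: "\<And>F. F \<in> T \<Longrightarrow> X \<subseteq> {x. n F \<bullet> x \<le> b F} \<and> F = X \<inter> {x. n F \<bullet> x = b F}"
    and r: "\<And>F. F \<in> T \<Longrightarrow> r \<in> F"
    and sum0: "(\<Sum>F\<in>T. l F *\<^sub>R n F) = 0"
    and F0: "F0 \<in> T" "l F0 \<noteq> 0"
    and k: "k \<in> T" "\<And>j. j \<in> T \<Longrightarrow> j \<noteq> k \<Longrightarrow> l j \<le> 0"
  shows False
proof -
  have bF: "b F = n F \<bullet> r" if "F \<in> T" for F
  proof -
    have "r \<in> X \<inter> {x. n F \<bullet> x = b F}" using nb[OF that] r[OF that] by simp
    then show ?thesis by simp
  qed
  have key: "(\<Sum>F\<in>T. l F * (n F \<bullet> x - b F)) = 0" for x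
  proof -
    have "(\<Sum>F\<in>T. l F * (n F \<bullet> x - b F)) = (\<Sum>F\<in>T. (l F *\<^sub>R n F) \<bullet> (x - r))"
      by (rule sum.cong) (auto simp: bF inner_diff_right right_diff_distrib)
    also have "\<dots> = (\<Sum>F\<in>T. l F *\<^sub>R n F) \<bullet> (x - r)" by (simp add: inner_sum_left)
    finally show ?thesis using sum0 by simp
  qed
  have notX: "\<not> X \<subseteq> {x. n F \<bullet> x = b F}" if "F \<in> T" for F
  proof
    assume "X \<subseteq> {x. n F \<bullet> x = b F}"
    then have "F = X" using nb[OF that] by blast
    then show False using fac[OF that] by simp
  qed
  show False
  proof (cases "l k \<le> 0")
    case True
    then have lle: "l F \<le> 0" if "F \<in> T" for F using k that by fastforce
    have "\<forall>F\<in>T. l F * (n F \<bullet> x - b F) = 0" if "x \<in> X" for x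
    proof (subst sum_nonneg_eq_0_iff[OF fin, symmetric])
      show "0 \<le> l F * (n F \<bullet> x - b F)" if "F \<in> T" for F
      proof -
        have "n F \<bullet> x - b F \<le> 0" using nb[OF that] \<open>x \<in> X\<close> by auto
        then show ?thesis using lle[OF that] by (simp add: mult_nonpos_nonpos)
      qed
      show "(\<Sum>F\<in>T. l F * (n F \<bullet> x - b F)) = 0" by (rule key)
    qed
    then have "X \<subseteq> {x. n F0 \<bullet> x = b F0}" using F0 by auto
    then show False using notX F0 by blast
  next
    case False
    then have lk: "l k > 0" by simp
    have zero: "\<forall>F\<in>T - {k}. l F * (n F \<bullet> x - b F) = 0" if "x \<in> k" for x
    proof (subst sum_nonneg_eq_0_iff[symmetric])
      show "finite (T - {k})" using fin by simp
      have xX: "x \<in> X" "n k \<bullet> x = b k" using nb[OF k(1)] that by auto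
      show "0 \<le> l F * (n F \<bullet> x - b F)" if "F \<in> T - {k}" for F
      proof -
        have "n F \<bullet> x - b F \<le> 0" using nb[of F] that xX by auto
        then show ?thesis using k(2)[of F] that by (simp add: mult_nonpos_nonpos)
      qed
      have "(\<Sum>F\<in>T. l F * (n F \<bullet> x - b F)) = l k * (n k \<bullet> x - b k) + (\<Sum>F\<in>T - {k}. l F * (n F \<bullet> x - b F))"
        using fin k(1) by (simp add: sum.remove)
      then show "(\<Sum>F\<in>T - {k}. l F * (n F \<bullet> x - b F)) = 0" using key xX by simp
    qed
    show False
    proof (cases "\<exists>j\<in>T. j \<noteq> k \<and> l j < 0")
      case True
      then obtain j where j: "j \<in> T" "j \<noteq> k" "l j < 0" by blast
      have "k \<subseteq> j"
      proof
        fix x assume "x \<in> k"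
        then have "l j * (n j \<bullet> x - b j) = 0" using zero j by blast
        then have "n j \<bullet> x = b j" using j by simp
        moreover have "x \<in> X" using \<open>x \<in> k\<close> nb[OF k(1)] by blast
        ultimately show "x \<in> j" using nb[OF j(1)] by blast
      qed
      then have "k = j" using facet_subset_eq fac k(1) j(1) by blast
      then show False using j by simp
    next
      case False
      then have "l j = 0" if "j \<in> T" "j \<noteq> k" for j using k(2)[OF that] that by force
      then have "(\<Sum>F\<in>T. l F *\<^sub>R n F) = l k *\<^sub>R n k"
        using fin k(1) by (simp add: sum.remove sum.neutral)
      then have "n k = 0" using sum0 lk by simp
      then have "k = X \<inter> {x. 0 = b k}" using nb[OF k(1)] by simp
      then have "k = X \<or> k = {}" by (cases "b k = 0") auto
      then show False using fac[OF k(1)] by (auto simp: facet_of_def)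
    qed
  qed
qed

lemma normal_in_span:
  fixes X F :: "'a::euclidean_space set"
  assumes "polytope X" "F facet_of X" "r \<in> X"
  obtains a b where "a \<in> span ((+) (- r) ` X)" "a \<noteq> 0" "X \<subseteq> {x. a \<bullet> x \<le> b}" "F = X \<inter> {x. a \<bullet> x = b}"
proof -
  obtain a0 b0 where ab0: "a0 \<noteq> 0" "X \<subseteq> {x. a0 \<bullet> x \<le> b0}" "F = X \<inter> {x. a0 \<bullet> x = b0}"
    using facet_of_polyhedron[OF polytope_imp_polyhedron[OF assms(1)] assms(2)] by metis
  obtain a z where az: "a \<in> span ((+) (- r) ` X)" "\<And>w. w \<in> span ((+) (- r) ` X) \<Longrightarrow> orthogonal z w" "a0 = a + z"
    using orthogonal_subspace_decomp_exists by metis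
  have zx: "z \<bullet> x = z \<bullet> r" if "x \<in> X" for x
  proof -
    have "-r + x \<in> span ((+) (- r) ` X)" using that by (simp add: span_base)
    then have "z \<bullet> (-r + x) = 0" using az(2) orthogonal_def by blast
    then show ?thesis by (simp add: inner_add_right inner_diff_right)
  qed
  have eq: "a0 \<bullet> x = a \<bullet> x + z \<bullet> r" if "x \<in> X" for x
    using zx[OF that] az(3) by (simp add: inner_add_left)
  have 1: "X \<subseteq> {x. a \<bullet> x \<le> b0 - z \<bullet> r}" using ab0(2) eq by fastforce
  have 2: "F = X \<inter> {x. a \<bullet> x = b0 - z \<bullet> r}" using ab0(3) eq by fastforce
  have "a \<noteq> 0"
  proof
    assume "a = 0"
    then have "F = X \<or> F = {}" using 2 by auto
    then show False using assms(2) by (auto simp: facet_of_def)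
  qed
  then show ?thesis using that az(1) 1 2 by blast
qed

lemma sign3:
  fixes l :: "'b \<Rightarrow> real"
  assumes "A \<noteq> B" "A \<noteq> C" "B \<noteq> C"
  shows "(\<exists>k\<in>{A,B,C}. \<forall>j\<in>{A,B,C}. j \<noteq> k \<longrightarrow> l j \<le> 0) \<or> (\<exists>k\<in>{A,B,C}. \<forall>j\<in>{A,B,C}. j \<noteq> k \<longrightarrow> l j \<ge> 0)"
  using assms by (cases "l A \<le> 0"; cases "l B \<le> 0"; cases "l C \<le> 0") auto

lemma no_three:
  fixes X R :: "'a::euclidean_space set"
  assumes X: "polytope X" and R: "R face_of X" "aff_dim R = aff_dim X - 2" "r \<in> R"
    and F: "F1 facet_of X" "F2 facet_of X" "F3 facet_of X" "R \<subseteq> F1" "R \<subseteq> F2" "R \<subseteq> F3"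
    and d: "F1 \<noteq> F2" "F1 \<noteq> F3" "F2 \<noteq> F3"
  shows False
proof -
  have RX: "R \<subseteq> X" using R face_of_imp_subset by blast
  have rX: "r \<in> X" using RX R by blast
  define V where "V = span ((+) (- r) ` X)"
  define L where "L = span ((+) (- r) ` R)"
  define Oc where "Oc = {y \<in> V. \<forall>x \<in> L. orthogonal x y}"
  have LV: "L \<subseteq> V" unfolding L_def V_def by (rule span_mono) (use RX in blast)
  have dX: "aff_dim X = int (dim V)"
    using aff_dim_eq_dim[OF hull_inc[OF rX]] by (simp add: V_def)
  have dR: "aff_dim R = int (dim L)"
    using aff_dim_eq_dim[OF hull_inc[OF R(3)]] by (simp add: L_def)
  have "dim Oc + dim L = dim V"
    unfolding Oc_def by (rule dim_subspace_orthogonal_to_vectors) (use LV in \<open>auto simp: L_def V_def\<close>)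
  then have dO: "dim Oc = 2" using dX dR R(2) by linarith
  have "\<forall>F. \<exists>p. F facet_of X \<longrightarrow> (fst p \<in> V \<and> fst p \<noteq> 0 \<and> X \<subseteq> {x. fst p \<bullet> x \<le> snd p} \<and> F = X \<inter> {x. fst p \<bullet> x = snd p})"
  proof
    fix F
    show "\<exists>p. F facet_of X \<longrightarrow> (fst p \<in> V \<and> fst p \<noteq> 0 \<and> X \<subseteq> {x. fst p \<bullet> x \<le> snd p} \<and> F = X \<inter> {x. fst p \<bullet> x = snd p})"
    proof (cases "F facet_of X")
      case True
      then obtain a b where "a \<in> V" "a \<noteq> 0" "X \<subseteq> {x. a \<bullet> x \<le> b}" "F = X \<inter> {x. a \<bullet> x = b}"
        using normal_in_span[OF X True rX] unfolding V_def by metis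
      then show ?thesis by (intro exI[of _ "(a,b)"]) simp
    qed simp
  qed
  then obtain f where f: "\<forall>F. F facet_of X \<longrightarrow> (fst (f F) \<in> V \<and> fst (f F) \<noteq> 0 \<and> X \<subseteq> {x. fst (f F) \<bullet> x \<le> snd (f F)} \<and> F = X \<inter> {x. fst (f F) \<bullet> x = snd (f F)})"
    by (rule choice[THEN exE]) blast
  define n where "n F = fst (f F)" for F
  define b where "b F = snd (f F)" for F
  have nb: "n F \<in> V" "n F \<noteq> 0" "X \<subseteq> {x. n F \<bullet> x \<le> b F}" "F = X \<inter> {x. n F \<bullet> x = b F}" if "F facet_of X" for F
    using f that unfolding n_def b_def by auto
  define T where "T = {F1, F2, F3}"
  have Tfac: "F facet_of X" if "F \<in> T" for F using that F unfolding T_def by auto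
  have TR: "R \<subseteq> F" if "F \<in> T" for F using that F unfolding T_def by auto
  have onF: "n F \<bullet> z = b F" if "F \<in> T" "z \<in> R" for F z
  proof -
    have "z \<in> X \<inter> {x. n F \<bullet> x = b F}" using TR[OF that(1)] that(2) nb(4)[OF Tfac[OF that(1)]] by blast
    then show ?thesis by simp
  qed
  have nO: "n F \<in> Oc" if "F \<in> T" for F
  proof -
    have "orthogonal y (n F)" if "y \<in> L" for y
    proof -
      have "orthogonal (n F) y"
      proof (rule orthogonal_to_span)
        show "y \<in> span ((+) (- r) ` R)" using that L_def by simp
        fix w assume "w \<in> (+) (- r) ` R"
        then obtain z where "z \<in> R" "w = - r + z" by blast
        then show "orthogonal (n F) w"
          using onF[OF \<open>F \<in> T\<close> \<open>z \<in> R\<close>] onF[OF \<open>F \<in> T\<close> R(3)]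
          by (simp add: orthogonal_def inner_add_right inner_diff_right)
      qed
      then show ?thesis by (simp add: orthogonal_commute)
    qed
    then show ?thesis unfolding Oc_def using nb(1)[OF Tfac[OF that]] by blast
  qed
  have inj: "inj_on n T"
  proof
    fix F G assume FG: "F \<in> T" "G \<in> T" "n F = n G"
    have "b F = b G" using onF[OF FG(1) R(3)] onF[OF FG(2) R(3)] FG(3) by simp
    then show "F = G" using nb(4)[OF Tfac[OF FG(1)]] nb(4)[OF Tfac[OF FG(2)]] FG(3) by simp
  qed
  have cT: "card T = 3" using d unfolding T_def by simp
  then have cnT: "card (n ` T) = 3" using card_image[OF inj] by simp
  have "dependent (n ` T)"
  proof (rule ccontr)
    assume "independent (n ` T)"
    moreover have "n ` T \<subseteq> Oc" using nO by blast
    ultimately have "card (n ` T) \<le> dim Oc" using independent_card_le_dim[of "n ` T" Oc] by blast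
    then show False using cnT dO by simp
  qed
  then obtain u where u: "\<exists>w\<in>n ` T. u w \<noteq> 0" "(\<Sum>w\<in>n ` T. u w *\<^sub>R w) = 0"
    using real_vector.dependent_finite[of "n ` T"] unfolding T_def by auto
  define l where "l F = u (n F)" for F
  have sum0: "(\<Sum>F\<in>T. l F *\<^sub>R n F) = 0"
    using u(2) sum.reindex[OF inj, of "\<lambda>w. u w *\<^sub>R w"] unfolding l_def by simp
  obtain F0 where F0: "F0 \<in> T" "l F0 \<noteq> 0" using u(1) unfolding l_def by blast
  have finT: "finite T" unfolding T_def by simp
  have nbT: "X \<subseteq> {x. n F \<bullet> x \<le> b F} \<and> F = X \<inter> {x. n F \<bullet> x = b F}" if "F \<in> T" for F
    using nb[OF Tfac[OF that]] by blast
  have rT: "r \<in> F" if "F \<in> T" for F using TR[OF that] R(3) by blast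
  from sign3[OF d, of l] show False
  proof
    assume "\<exists>k\<in>{F1, F2, F3}. \<forall>j\<in>{F1, F2, F3}. j \<noteq> k \<longrightarrow> l j \<le> 0"
    then obtain k where k1: "k \<in> T" and k2: "\<forall>j\<in>T. j \<noteq> k \<longrightarrow> l j \<le> 0" unfolding T_def by (rule bexE)
    have k2': "\<And>j. j \<in> T \<Longrightarrow> j \<noteq> k \<Longrightarrow> l j \<le> 0" using k2 by blast
    show False by (rule Wgen[OF finT Tfac nbT rT sum0 F0 k1 k2'])
  next
    assume "\<exists>k\<in>{F1, F2, F3}. \<forall>j\<in>{F1, F2, F3}. j \<noteq> k \<longrightarrow> l j \<ge> 0"
    then obtain k where k1: "k \<in> T" and k2: "\<forall>j\<in>T. j \<noteq> k \<longrightarrow> l j \<ge> 0" unfolding T_def by (rule bexE)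
    have sum0': "(\<Sum>F\<in>T. (- l F) *\<^sub>R n F) = 0"
      using sum0 by (simp add: sum_negf)
    have F0': "- l F0 \<noteq> 0" using F0 by simp
    have k2': "\<And>j. j \<in> T \<Longrightarrow> j \<noteq> k \<Longrightarrow> - l j \<le> 0" using k2 by force
    show False by (rule Wgen[OF finT Tfac nbT rT sum0' F0(1) F0' k1 k2'])
  qed
qed

lemma ridge_two:
  fixes X R :: "'a::euclidean_space set"
  assumes X: "polytope X" and R: "R face_of X" "aff_dim R = aff_dim X - 2" "R \<noteq> {}"
  obtains F1 F2 where "F1 facet_of X" "F2 facet_of X" "F1 \<noteq> F2" "R \<subseteq> F1" "R \<subseteq> F2"
    "\<And>F. F facet_of X \<Longrightarrow> R \<subseteq> F \<Longrightarrow> F = F1 \<or> F = F2"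
proof -
  have "R \<noteq> X" using R(2) by auto
  obtain F1 where F1: "F1 facet_of X" "R \<subseteq> F1"
    using face_of_polyhedron_subset_facet[OF polytope_imp_polyhedron[OF X] R(1) R(3) \<open>R \<noteq> X\<close>] by blast
  have "\<exists>F2. F2 facet_of X \<and> R \<subseteq> F2 \<and> F2 \<noteq> F1"
  proof (rule ccontr)
    assume "\<not> ?thesis"
    then have "{F. F facet_of X \<and> R \<subseteq> F} = {F1}" using F1 by blast
    then have "R = F1" using face_of_polyhedron[OF polytope_imp_polyhedron[OF X] R(1) R(3) \<open>R \<noteq> X\<close>] by simp
    then show False using F1 R(2) by (simp add: facet_of_def)
  qed
  then obtain F2 where F2: "F2 facet_of X" "R \<subseteq> F2" "F2 \<noteq> F1" by blast
  obtain r where "r \<in> R" using R(3) by blast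
  show ?thesis
  proof (rule that[OF F1(1) F2(1) F2(3)[symmetric] F1(2) F2(2)])
    fix F assume "F facet_of X" "R \<subseteq> F"
    then show "F = F1 \<or> F = F2"
      using no_three[OF X R(1,2) \<open>r \<in> R\<close> F1(1) F2(1) _ F1(2) F2(2), of F] F2(3) by blast
  qed
qed



lemma IL:
  fixes P F S :: "'a::euclidean_space set"
  assumes "F facet_of P" "S facet_of P" "F \<noteq> S"
  shows "aff_dim (F \<inter> S) < aff_dim P - 1" "(F \<inter> S) face_of P" "(F \<inter> S) face_of S"
proof -
  show fP: "(F \<inter> S) face_of P" using assms face_of_Int facet_of_imp_face_of by blast
  show fS: "(F \<inter> S) face_of S"
    using face_of_subset[OF fP, of S] facet_of_imp_subset[OF assms(2)] by blast
  have "F \<inter> S \<noteq> S"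
  proof
    assume "F \<inter> S = S"
    then have "S \<subseteq> F" by blast
    then have "S = F" using facet_subset_eq assms by blast
    then show False using assms by simp
  qed
  then have "aff_dim (F \<inter> S) < aff_dim S"
    using face_of_aff_dim_lt[OF face_of_imp_convex[OF facet_of_imp_face_of[OF assms(2)]] fS] by blast
  then show "aff_dim (F \<inter> S) < aff_dim P - 1" using assms(2) by (simp add: facet_of_def)
qed

lemma IL2:
  fixes P F S R :: "'a::euclidean_space set"
  assumes "F facet_of P" "S facet_of P" "F \<noteq> S" "R face_of P" "aff_dim R = aff_dim P - 2" "R \<subseteq> F \<inter> S"
  shows "F \<inter> S = R"
proof (rule ccontr)
  assume ne: "F \<inter> S \<noteq> R"
  have "R face_of (F \<inter> S)"
    using face_of_subset[OF assms(4) assms(6)] IL(2)[OF assms(1-3)] face_of_imp_subset by blast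
  then have "aff_dim R < aff_dim (F \<inter> S)"
    using face_of_aff_dim_lt[OF face_of_imp_convex[OF IL(2)[OF assms(1-3)]]] ne[symmetric] by blast
  then show False using IL(1)[OF assms(1-3)] assms(5) by simp
qed

lemma hypF:
  fixes P F :: "'a::euclidean_space set"
  assumes "F facet_of P" "n \<noteq> 0" "F = P \<inter> {x. n \<bullet> x = b}" "aff_dim P = int DIM('a)"
  shows "affine hull F = {x. n \<bullet> x = b}"
proof (rule affine_dim_equal)
  show "affine (affine hull F)" by simp
  show "affine {x. n \<bullet> x = b}" by (rule affine_hyperplane)
  show "affine hull F \<noteq> {}" using assms(1) by (simp add: facet_of_def)
  show "affine hull F \<subseteq> {x. n \<bullet> x = b}"
    by (rule hull_minimal) (use assms(3) affine_hyperplane in auto)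
  show "aff_dim (affine hull F) = aff_dim {x. n \<bullet> x = b}"
    using assms(1,2,4) by (simp add: facet_of_def)
qed

lemma scale:
  fixes P F :: "'a::euclidean_space set"
  assumes "F facet_of P" "n \<noteq> 0" "P \<subseteq> {x. n \<bullet> x \<le> b}" "F = P \<inter> {x. n \<bullet> x = b}" "aff_dim P = int DIM('a)"
    and "a \<noteq> 0" "P \<subseteq> {x. a \<bullet> x \<le> c}" "F \<subseteq> {x. a \<bullet> x = c}"
  shows "\<exists>t>0. a = t *\<^sub>R n \<and> c = t * b"
proof -
  have h: "affine hull F = {x. n \<bullet> x = b}" by (rule hypF[OF assms(1,2,4,5)])
  have "{x. n \<bullet> x = b} = {x. a \<bullet> x = c}"
  proof (rule affine_dim_equal)
    show "affine {x. n \<bullet> x = b}" "affine {x. a \<bullet> x = c}" by (simp_all add: affine_hyperplane)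
    show "{x. n \<bullet> x = b} \<noteq> {}" using assms(2) hyperplane_eq_empty by blast
    show "{x. n \<bullet> x = b} \<subseteq> {x. a \<bullet> x = c}"
      unfolding h[symmetric] by (rule hull_minimal) (use assms(8) affine_hyperplane in auto)
    show "aff_dim {x. n \<bullet> x = b} = aff_dim {x. a \<bullet> x = c}" using assms(2,6) by simp
  qed
  from hyperplane_same[OF assms(2) this] obtain t where t: "a = t *\<^sub>R n" "c = t * b" by blast
  have "\<exists>p\<in>P. n \<bullet> p < b"
  proof (rule ccontr)
    assume "\<not> ?thesis"
    then have "P \<subseteq> {x. n \<bullet> x = b}" using assms(3) by force
    then have "F = P" using assms(4) by blast
    then show False using assms(1) by simp
  qed
  then obtain p where p: "p \<in> P" "n \<bullet> p < b" by blast
  have "a \<bullet> p \<le> c" using assms(7) p by blast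
  then have "t * (n \<bullet> p - b) \<le> 0" using t by (simp add: right_diff_distrib)
  then have "t \<ge> 0" using p(2) by (simp add: mult_le_0_iff)
  moreover have "t \<noteq> 0" using assms(6) t by auto
  ultimately have "t > 0" by simp
  then show ?thesis using t by blast
qed

lemma hplus_lt:
  fixes P F :: "'a::euclidean_space set"
  assumes "F facet_of P" "n \<noteq> 0" "P \<subseteq> {x. n \<bullet> x \<le> b}" "F = P \<inter> {x. n \<bullet> x = b}" "aff_dim P = int DIM('a)"
    and "x \<in> hplus P F"
  shows "n \<bullet> x < b"
proof -
  obtain a l where al: "a \<noteq> 0" "affine hull F = {y. a \<bullet> y = l}" "P \<subseteq> {y. a \<bullet> y \<ge> l}" "a \<bullet> x > l"
    using assms(6) unfolding hplus_def by blast
  have "F \<subseteq> {y. (- a) \<bullet> y = - l}" using al(2) hull_subset[of F affine] by auto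
  moreover have "P \<subseteq> {y. (- a) \<bullet> y \<le> - l}" using al(3) by auto
  ultimately obtain t where t: "t > 0" "- a = t *\<^sub>R n" "- l = t * b"
    using scale[OF assms(1-5), of "- a" "- l"] al(1) by auto
  have "t * (n \<bullet> x) < t * b" using al(4) t by (metis inner_minus_left inner_scaleR_left neg_less_iff_less)
  then show ?thesis using t(1) by simp
qed

lemma hminus_gt:
  fixes P F :: "'a::euclidean_space set"
  assumes "F facet_of P" "n \<noteq> 0" "P \<subseteq> {x. n \<bullet> x \<le> b}" "F = P \<inter> {x. n \<bullet> x = b}" "aff_dim P = int DIM('a)"
    and "x \<in> hminus P F"
  shows "n \<bullet> x > b"
proof -
  obtain a l where al: "a \<noteq> 0" "affine hull F = {y. a \<bullet> y = l}" "P \<subseteq> {y. a \<bullet> y \<ge> l}" "a \<bullet> x < l"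
    using assms(6) unfolding hminus_def by blast
  have "F \<subseteq> {y. (- a) \<bullet> y = - l}" using al(2) hull_subset[of F affine] by auto
  moreover have "P \<subseteq> {y. (- a) \<bullet> y \<le> - l}" using al(3) by auto
  ultimately obtain t where t: "t > 0" "- a = t *\<^sub>R n" "- l = t * b"
    using scale[OF assms(1-5), of "- a" "- l"] al(1) by auto
  have "t * (n \<bullet> x) > t * b" using al(4) t by (metis inner_minus_left inner_scaleR_left neg_less_iff_less)
  then show ?thesis using t(1) by (simp add: mult_less_cancel_left_pos)
qed

lemma span_full:
  fixes P :: "'a::euclidean_space set"
  assumes "aff_dim P = int DIM('a)" "r \<in> P"
  shows "span ((+) (- r) ` P) = UNIV"
proof -
  have "aff_dim P = int (dim ((+) (- r) ` P))" using aff_dim_eq_dim[OF hull_inc[OF assms(2)]] .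
  then have "dim ((+) (- r) ` P) = DIM('a)" using assms(1) by simp
  then show ?thesis using dim_eq_full by blast
qed

lemma two_span:
  fixes X K :: "'a::euclidean_space set"
  assumes X: "polytope X" and K: "K face_of X" "aff_dim K = aff_dim X - 2" "r \<in> K"
    and F: "F1 facet_of X" "F2 facet_of X" "F1 \<noteq> F2" "K \<subseteq> F1" "K \<subseteq> F2"
    and n1: "n1 \<in> span ((+) (- r) ` X)" "X \<subseteq> {x. n1 \<bullet> x \<le> b1}" "F1 = X \<inter> {x. n1 \<bullet> x = b1}"
    and n2: "n2 \<in> span ((+) (- r) ` X)" "X \<subseteq> {x. n2 \<bullet> x \<le> b2}" "F2 = X \<inter> {x. n2 \<bullet> x = b2}"
    and a: "a \<in> span ((+) (- r) ` X)" "\<And>z. z \<in> K \<Longrightarrow> a \<bullet> z = a \<bullet> r"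
  shows "\<exists>\<alpha> \<beta>. a = \<alpha> *\<^sub>R n1 + \<beta> *\<^sub>R n2"
proof -
  have KX: "K \<subseteq> X" using K face_of_imp_subset by blast
  have rX: "r \<in> X" using KX K by blast
  define V where "V = span ((+) (- r) ` X)"
  define L where "L = span ((+) (- r) ` K)"
  define Oc where "Oc = {y \<in> V. \<forall>x \<in> L. orthogonal x y}"
  have LV: "L \<subseteq> V" unfolding L_def V_def by (rule span_mono) (use KX in blast)
  have dX: "aff_dim X = int (dim V)"
    using aff_dim_eq_dim[OF hull_inc[OF rX]] by (simp add: V_def)
  have dK: "aff_dim K = int (dim L)"
    using aff_dim_eq_dim[OF hull_inc[OF K(3)]] by (simp add: L_def)
  have "dim Oc + dim L = dim V"
    unfolding Oc_def by (rule dim_subspace_orthogonal_to_vectors) (use LV in \<open>auto simp: L_def V_def\<close>)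
  then have dO: "dim Oc = 2" using dX dK K(2) by linarith
  have inOc: "w \<in> Oc" if "w \<in> V" "\<And>z. z \<in> K \<Longrightarrow> w \<bullet> z = w \<bullet> r" for w
  proof -
    have "orthogonal y w" if "y \<in> L" for y
    proof -
      have "orthogonal w y"
      proof (rule orthogonal_to_span)
        show "y \<in> span ((+) (- r) ` K)" using \<open>y \<in> L\<close> L_def by simp
        fix q assume "q \<in> (+) (- r) ` K"
        then obtain z where "z \<in> K" "q = - r + z" by blast
        then show "orthogonal w q"
          using \<open>\<And>z. z \<in> K \<Longrightarrow> w \<bullet> z = w \<bullet> r\<close>[OF \<open>z \<in> K\<close>]
          by (simp add: orthogonal_def inner_add_right inner_diff_right)
      qed
      then show ?thesis by (simp add: orthogonal_commute)
    qed
    then show ?thesis unfolding Oc_def using that(1) by blast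
  qed
  have on1: "n1 \<bullet> z = b1" if "z \<in> K" for z
  proof -
    have "z \<in> X \<inter> {x. n1 \<bullet> x = b1}" using F(4) that n1(3) by blast
    then show ?thesis by simp
  qed
  have on2: "n2 \<bullet> z = b2" if "z \<in> K" for z
  proof -
    have "z \<in> X \<inter> {x. n2 \<bullet> x = b2}" using F(5) that n2(3) by blast
    then show ?thesis by simp
  qed
  have n1O: "n1 \<in> Oc" using inOc[of n1] n1(1) on1 K(3) unfolding V_def by simp
  have n2O: "n2 \<in> Oc" using inOc[of n2] n2(1) on2 K(3) unfolding V_def by simp
  have aO: "a \<in> Oc" using inOc[of a] a unfolding V_def by simp
  have n12: "n1 \<noteq> n2"
  proof
    assume "n1 = n2"
    moreover have "b1 = b2" using on1[OF K(3)] on2[OF K(3)] calculation by simp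
    ultimately show False using F(3) n1(3) n2(3) by simp
  qed
  have indep: "independent {n1, n2}"
  proof (rule ccontr)
    assume "\<not> independent {n1, n2}"
    then obtain u where u: "\<exists>w\<in>{n1, n2}. u w \<noteq> 0" "(\<Sum>w\<in>{n1, n2}. u w *\<^sub>R w) = 0"
      using real_vector.dependent_finite[of "{n1, n2}"] by auto
    define nn where "nn F = (if F = F1 then n1 else n2)" for F
    define bb where "bb F = (if F = F1 then b1 else b2)" for F
    define l where "l F = u (nn F)" for F
    define T where "T = {F1, F2}"
    have finT: "finite T" unfolding T_def by simp
    have Tfac: "F facet_of X" if "F \<in> T" for F using that F unfolding T_def by auto
    have nbT: "X \<subseteq> {x. nn F \<bullet> x \<le> bb F} \<and> F = X \<inter> {x. nn F \<bullet> x = bb F}" if "F \<in> T" for F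
      using that n1 n2 F(3) unfolding T_def nn_def bb_def by auto
    have rT: "r \<in> F" if "F \<in> T" for F using that F K(3) unfolding T_def by auto
    have sum0: "(\<Sum>F\<in>T. l F *\<^sub>R nn F) = 0"
      using u(2) n12 F(3) unfolding T_def l_def nn_def by simp
    have F0: "\<exists>F0\<in>T. l F0 \<noteq> 0" using u(1) F(3) unfolding T_def l_def nn_def by auto
    then obtain F0 where F0: "F0 \<in> T" "l F0 \<noteq> 0" by blast
    have F1T: "F1 \<in> T" unfolding T_def by simp
    show False
    proof (cases "l F2 \<le> 0")
      case True
      have k: "\<And>j. j \<in> T \<Longrightarrow> j \<noteq> F1 \<Longrightarrow> l j \<le> 0" using True unfolding T_def by auto
      show False by (rule Wgen[OF finT Tfac nbT rT sum0 F0 F1T k])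
    next
      case False
      have k: "\<And>j. j \<in> T \<Longrightarrow> j \<noteq> F1 \<Longrightarrow> - l j \<le> 0" using False unfolding T_def by auto
      have sum0': "(\<Sum>F\<in>T. (- l F) *\<^sub>R nn F) = 0" using sum0 by (simp add: sum_negf)
      have F0': "- l F0 \<noteq> 0" using F0 by simp
      show False by (rule Wgen[OF finT Tfac nbT rT sum0' F0(1) F0' F1T k])
    qed
  qed
  have "Oc \<subseteq> span {n1, n2}"
    using card_eq_dim[of "{n1, n2}" Oc] n1O n2O n12 dO indep by simp
  then have "a \<in> span {n1, n2}" using aO by blast
  then obtain \<alpha> where "a - \<alpha> *\<^sub>R n1 \<in> span {n2}" by (auto simp: span_insert)
  then obtain \<beta> where "a - \<alpha> *\<^sub>R n1 = \<beta> *\<^sub>R n2" by (auto simp: span_singleton)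
  then have "a = \<alpha> *\<^sub>R n1 + \<beta> *\<^sub>R n2" by (simp add: algebra_simps)
  then show ?thesis by blast
qed



locale setting =
  fixes P S G :: "'a::euclidean_space set" and FF :: "'a set set" and v :: 'a
    and n :: "'a set \<Rightarrow> 'a" and b :: "'a set \<Rightarrow> real"
  assumes d3: "DIM('a) \<ge> 3" and polyP: "polytope P" and dimP: "aff_dim P = int DIM('a)"
    and Sfac: "S facet_of P" and FFadj: "FF \<subseteq> adj P S" and nonsimp: "nonsimple P S FF"
    and Gface: "G face_of P" and dimG: "aff_dim G = int DIM('a) - 3" and GS: "G \<subseteq> S"
    and vS: "n S \<bullet> v > b S" and vF: "\<And>F. F \<in> FF \<Longrightarrow> n F \<bullet> v = b F"
    and vO: "\<And>F. F facet_of P \<Longrightarrow> F \<notin> FF \<Longrightarrow> F \<noteq> S \<Longrightarrow> n F \<bullet> v < b F"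
    and nb: "\<And>F. F facet_of P \<Longrightarrow> n F \<noteq> 0 \<and> P \<subseteq> {x. n F \<bullet> x \<le> b F} \<and> F = P \<inter> {x. n F \<bullet> x = b F}"
begin

lemma FFfac: "F \<in> FF \<Longrightarrow> F facet_of P \<and> F \<noteq> S"
  using FFadj unfolding adj_def adjacent_def by auto

lemma convP: "convex P" using polyP polytope_imp_convex by blast

lemma Pne: "P \<noteq> {}" using dimP by auto

lemma Gne: "G \<noteq> {}" using dimG d3 by auto

lemma PQ: "P \<subseteq> convex hull (insert v P)" by (meson hull_subset subset_insertI subset_trans)

lemma vQ: "v \<in> convex hull (insert v P)" by (simp add: hull_inc)

lemma polyQ: "polytope (convex hull (insert v P))"
proof -
  obtain V0 where "finite V0" "P = convex hull V0" using polyP unfolding polytope_def by blast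
  then have "convex hull (insert v P) = convex hull (insert v V0)" using hull_insert by metis
  then show ?thesis unfolding polytope_def using \<open>finite V0\<close> by blast
qed

lemma convQ: "convex (convex hull (insert v P))" by simp

lemma dimQ: "aff_dim (convex hull (insert v P)) = int DIM('a)"
  using aff_dim_subset[OF PQ] dimP aff_dim_le_DIM[of "convex hull (insert v P)"] by linarith

lemma Qle: "P \<subseteq> {x. a \<bullet> x \<le> c} \<Longrightarrow> a \<bullet> v \<le> c \<Longrightarrow> convex hull (insert v P) \<subseteq> {x. a \<bullet> x \<le> c}"
  by (rule hull_minimal) (auto simp: convex_halfspace_le)

lemma nbF:
  assumes "F facet_of P"
  shows "n F \<noteq> 0" "P \<subseteq> {x. n F \<bullet> x \<le> b F}" "F = P \<inter> {x. n F \<bullet> x = b F}"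
  using nb[OF assms] by auto

lemma facQ: "E face_of convex hull (insert v P) \<Longrightarrow> E \<noteq> {} \<Longrightarrow> aff_dim E = int DIM('a) - 1
   \<Longrightarrow> E facet_of convex hull (insert v P)"
  unfolding facet_of_def using dimQ by simp

lemma facP_dim: "F facet_of P \<Longrightarrow> aff_dim F = int DIM('a) - 1"
  unfolding facet_of_def using dimP by simp

lemma facP_I: "F face_of P \<Longrightarrow> F \<noteq> {} \<Longrightarrow> aff_dim F = int DIM('a) - 1 \<Longrightarrow> F facet_of P"
  unfolding facet_of_def using dimP by simp

lemma polyS: "polytope S" using face_of_polytope_polytope[OF polyP facet_of_imp_face_of[OF Sfac]] .

lemma dimS: "aff_dim S = int DIM('a) - 1" using facP_dim[OF Sfac] .

lemma GfS: "G face_of S"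
  using face_of_subset[OF Gface GS facet_of_imp_subset[OF Sfac]] .

lemma ridge_P:
  assumes "R face_of P" "aff_dim R = int DIM('a) - 2" "R \<noteq> {}"
  obtains F1 F2 where "F1 facet_of P" "F2 facet_of P" "F1 \<noteq> F2" "R \<subseteq> F1" "R \<subseteq> F2"
    "\<And>F. F facet_of P \<Longrightarrow> R \<subseteq> F \<Longrightarrow> F = F1 \<or> F = F2"
  using ridge_two[OF polyP assms(1) _ assms(3)] assms(2) dimP by auto

lemma facet_of_S_ridge:
  assumes "R facet_of S"
  shows "R face_of P" "aff_dim R = int DIM('a) - 2" "R \<noteq> {}"
proof -
  show "R face_of P" using face_of_trans[OF facet_of_imp_face_of[OF assms] facet_of_imp_face_of[OF Sfac]] .
  show "aff_dim R = int DIM('a) - 2" using assms dimS by (simp add: facet_of_def)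
  show "R \<noteq> {}" using assms by (simp add: facet_of_def)
qed

definition "AA = {F. F facet_of P \<and> G \<subseteq> F \<and> F \<notin> FF \<and> F \<noteq> S}"
definition "BB = {F \<in> FF. G \<subseteq> F}"
definition "NN = {F. F facet_of P \<and> F \<noteq> S \<and> G \<subseteq> F \<and> aff_dim (F \<inter> S) = int DIM('a) - 2}"
definition "RR = (\<lambda>F. F \<inter> S) ` (NN - FF)"

lemma NN_props: "card NN = 2" "inj_on (\<lambda>F. F \<inter> S) NN" "BB \<subseteq> NN"
proof -
  have dGS: "aff_dim G = aff_dim S - 2" using dimG dimS by simp
  obtain R1 R2 where R: "R1 facet_of S" "R2 facet_of S" "R1 \<noteq> R2" "G \<subseteq> R1" "G \<subseteq> R2"
    "\<And>F. F facet_of S \<Longrightarrow> G \<subseteq> F \<Longrightarrow> F = R1 \<or> F = R2"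
    using ridge_two[OF polyS GfS dGS Gne] by blast
  show inj: "inj_on (\<lambda>F. F \<inter> S) NN"
  proof
    fix F F' assume FF': "F \<in> NN" "F' \<in> NN" "F \<inter> S = F' \<inter> S"
    have f: "F facet_of P" "F \<noteq> S" "F' facet_of P" "F' \<noteq> S" using FF' unfolding NN_def by auto
    have W: "(F \<inter> S) face_of P" "aff_dim (F \<inter> S) = int DIM('a) - 2" "F \<inter> S \<noteq> {}"
      using IL(2)[OF f(1) Sfac f(2)] FF'(1) Gne GS unfolding NN_def by auto
    obtain Z1 Z2 where Z: "\<And>X. X facet_of P \<Longrightarrow> F \<inter> S \<subseteq> X \<Longrightarrow> X = Z1 \<or> X = Z2"
      using ridge_P[OF W] by metis
    have "F = Z1 \<or> F = Z2" "F' = Z1 \<or> F' = Z2" "S = Z1 \<or> S = Z2"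
      using Z[of F] Z[of F'] Z[of S] f Sfac FF'(3) by auto
    then show "F = F'" using f by auto
  qed
  have img: "(\<lambda>F. F \<inter> S) ` NN = {R1, R2}"
  proof
    show "(\<lambda>F. F \<inter> S) ` NN \<subseteq> {R1, R2}"
    proof
      fix W assume "W \<in> (\<lambda>F. F \<inter> S) ` NN"
      then obtain F where F: "F \<in> NN" "W = F \<inter> S" by blast
      have f: "F facet_of P" "F \<noteq> S" "G \<subseteq> F" "aff_dim (F \<inter> S) = int DIM('a) - 2"
        using F unfolding NN_def by auto
      have "W facet_of S"
        unfolding facet_of_def using IL(3)[OF f(1) Sfac f(2)] F(2) f(3,4) GS Gne dimS by auto
      then show "W \<in> {R1, R2}" using R(6)[of W] F(2) f(3) GS by blast
    qed
  next
    have "Ri \<in> (\<lambda>F. F \<inter> S) ` NN" if "Ri facet_of S" "G \<subseteq> Ri" for Ri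
    proof -
      note Rr = facet_of_S_ridge[OF that(1)]
      obtain Z1 Z2 where Z: "Z1 facet_of P" "Z2 facet_of P" "Z1 \<noteq> Z2" "Ri \<subseteq> Z1" "Ri \<subseteq> Z2"
        using ridge_P[OF Rr] by metis
      obtain Z where Zf: "Z facet_of P" "Z \<noteq> S" "Ri \<subseteq> Z" using Z by metis
      have RiS: "Ri \<subseteq> S" using that(1) facet_of_imp_subset by blast
      have eq: "Z \<inter> S = Ri" using IL2[OF Zf(1) Sfac Zf(2) Rr(1)] Rr(2) dimP Zf(3) RiS by simp
      have "Z \<in> NN" unfolding NN_def using Zf eq Rr(2) that(2) by auto
      then show ?thesis using eq by blast
    qed
    then show "{R1, R2} \<subseteq> (\<lambda>F. F \<inter> S) ` NN" using R by blast
  qed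
  show "card NN = 2" using card_image[OF inj] img R(3) by simp
  show "BB \<subseteq> NN"
  proof
    fix F assume "F \<in> BB"
    then have F: "F \<in> FF" "G \<subseteq> F" unfolding BB_def by auto
    then have "adjacent P S F" using FFadj unfolding adj_def by blast
    then obtain R where R: "R face_of P" "aff_dim R = int DIM('a) - 2" "R \<subseteq> S \<inter> F"
      and f: "F facet_of P" "S \<noteq> F" unfolding adjacent_def by blast
    have "F \<inter> S = R" using IL2[OF f(1) Sfac f(2)[symmetric] R(1)] R(2,3) dimP by auto
    then show "F \<in> NN" unfolding NN_def using f F R(2) by auto
  qed
qed

lemma AA_ne: "AA \<noteq> {}"
proof
  assume A0: "AA = {}"
  have inFF: "F \<in> FF" if "F facet_of P" "G \<subseteq> F" "F \<noteq> S" for F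
    using A0 that unfolding AA_def by blast
  have dGS: "aff_dim G = aff_dim S - 2" using dimG dimS by simp
  obtain R1 where R1: "R1 facet_of S" "G \<subseteq> R1"
    using ridge_two[OF polyS GfS dGS Gne] by metis
  note Rr = facet_of_S_ridge[OF R1(1)]
  obtain Z1 Z2 where Z: "Z1 facet_of P" "Z2 facet_of P" "Z1 \<noteq> Z2" "R1 \<subseteq> Z1" "R1 \<subseteq> Z2"
    using ridge_P[OF Rr] by metis
  obtain F1 where F1: "F1 facet_of P" "F1 \<noteq> S" "R1 \<subseteq> F1" using Z by metis
  have GF1: "G \<subseteq> F1" using F1 R1 by blast
  have F1FF: "F1 \<in> FF" using inFF[OF F1(1) GF1 F1(2)] .
  have polyF1: "polytope F1" using face_of_polytope_polytope[OF polyP facet_of_imp_face_of[OF F1(1)]] .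
  have GfF1: "G face_of F1" using face_of_subset[OF Gface GF1 facet_of_imp_subset[OF F1(1)]] .
  have dGF1: "aff_dim G = aff_dim F1 - 2" using dimG facP_dim[OF F1(1)] by simp
  obtain Y1 Y2 where Y: "Y1 facet_of F1" "Y2 facet_of F1" "Y1 \<noteq> Y2" "G \<subseteq> Y1" "G \<subseteq> Y2"
    using ridge_two[OF polyF1 GfF1 dGF1 Gne] by metis
  have WF1: "(F1 \<inter> S) face_of F1"
    using face_of_subset[OF IL(2)[OF F1(1) Sfac F1(2)], of F1] facet_of_imp_subset[OF F1(1)] by blast
  have dW: "aff_dim (F1 \<inter> S) < int DIM('a) - 1" using IL(1)[OF F1(1) Sfac F1(2)] dimP by simp
  have Yeq: "Yi = F1 \<inter> S" if "Yi facet_of F1" "Yi \<subseteq> S" for Yi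
  proof (rule ccontr)
    assume ne: "Yi \<noteq> F1 \<inter> S"
    have "Yi \<subseteq> F1 \<inter> S" using that facet_of_imp_subset by blast
    then have "Yi face_of (F1 \<inter> S)"
      using face_of_subset[OF facet_of_imp_face_of[OF that(1)]] face_of_imp_subset[OF WF1] by blast
    then have "aff_dim Yi < aff_dim (F1 \<inter> S)"
      using face_of_aff_dim_lt[OF face_of_imp_convex[OF WF1]] ne by blast
    moreover have "aff_dim Yi = int DIM('a) - 2" using that(1) facP_dim[OF F1(1)] by (simp add: facet_of_def)
    ultimately show False using dW by simp
  qed
  obtain Y where Yf: "Y facet_of F1" "G \<subseteq> Y" "\<not> Y \<subseteq> S"
    using Y Yeq by metis
  have YP: "Y face_of P" using face_of_trans[OF facet_of_imp_face_of[OF Yf(1)] facet_of_imp_face_of[OF F1(1)]] .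
  have dY: "aff_dim Y = int DIM('a) - 2" using Yf(1) facP_dim[OF F1(1)] by (simp add: facet_of_def)
  have Yne: "Y \<noteq> {}" using Yf(1) by (simp add: facet_of_def)
  obtain X1 X2 where X: "X1 facet_of P" "X2 facet_of P" "X1 \<noteq> X2" "Y \<subseteq> X1" "Y \<subseteq> X2"
    using ridge_P[OF YP dY Yne] by metis
  obtain X where Xf: "X facet_of P" "X \<noteq> F1" "Y \<subseteq> X" using X by metis
  have YF1: "Y \<subseteq> F1" using Yf(1) facet_of_imp_subset by blast
  have XS: "X \<noteq> S" using Xf(3) Yf(3) by blast
  have GX: "G \<subseteq> X" using Xf(3) Yf(2) by blast
  have XFF: "X \<in> FF" using inFF[OF Xf(1) GX XS] .
  have "adjacent P F1 X" unfolding adjacent_def using F1(1) Xf(1,2) YP dY YF1 Xf(3) by blast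
  moreover have "G \<subseteq> F1 \<inter> X \<inter> S" using GF1 GX GS by blast
  ultimately show False using nonsimp F1FF XFF Gface dimG unfolding nonsimple_def by blast
qed

lemma AA_face:
  assumes "F \<in> AA"
  shows "F = convex hull (insert v P) \<inter> {x. n F \<bullet> x = b F}" "F facet_of convex hull (insert v P)"
proof -
  have F: "F facet_of P" "F \<notin> FF" "F \<noteq> S" using assms unfolding AA_def by auto
  note nbf = nbF[OF F(1)]
  have lt: "n F \<bullet> v < b F" using vO F by blast
  show eq: "F = convex hull (insert v P) \<inter> {x. n F \<bullet> x = b F}"
    using seg_lt[OF convP Pne _ lt] nbf by blast
  have "F face_of convex hull (insert v P)"
    by (subst eq, rule face_of_Int_supporting_hyperplane_le[OF convQ]) (use Qle[OF nbf(2) less_imp_le[OF lt]] in blast)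
  then show "F facet_of convex hull (insert v P)"
    using facQ F(1) facP_dim by (auto simp: facet_of_def)
qed

lemma G_face_Q: "G face_of convex hull (insert v P)"
proof -
  obtain F where F: "F \<in> AA" using AA_ne by blast
  have GF: "G \<subseteq> F" "F facet_of P" using F unfolding AA_def by auto
  have "G face_of F" using face_of_subset[OF Gface GF(1) facet_of_imp_subset[OF GF(2)]] .
  then show ?thesis using face_of_trans facet_of_imp_face_of[OF AA_face(2)[OF F]] by blast
qed

lemma PE: "P \<inter> (convex hull (insert v P) \<inter> H) = P \<inter> H" using PQ by blast

lemma BB_face:
  assumes "F \<in> BB"
  shows "(convex hull (insert v P) \<inter> {x. n F \<bullet> x = b F}) facet_of convex hull (insert v P)"
    "G \<subseteq> convex hull (insert v P) \<inter> {x. n F \<bullet> x = b F}"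
    "P \<inter> (convex hull (insert v P) \<inter> {x. n F \<bullet> x = b F}) = F"
proof -
  have F: "F \<in> FF" "G \<subseteq> F" using assms unfolding BB_def by auto
  have Ff: "F facet_of P" using FFfac[OF F(1)] by blast
  note nbf = nbF[OF Ff]
  have eqv: "n F \<bullet> v = b F" using vF[OF F(1)] .
  define E where "E = convex hull (insert v P) \<inter> {x. n F \<bullet> x = b F}"
  show PE': "P \<inter> E = F" unfolding E_def using PE nbf(3) by blast
  have FE: "F \<subseteq> E" using PE' by blast
  then show "G \<subseteq> convex hull (insert v P) \<inter> {x. n F \<bullet> x = b F}" using F(2) E_def by blast
  have fE: "E face_of convex hull (insert v P)"
    unfolding E_def by (rule face_of_Int_supporting_hyperplane_le[OF convQ]) (use Qle[OF nbf(2)] eqv in force)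
  have "aff_dim E \<ge> aff_dim F" using aff_dim_subset[OF FE] .
  moreover have "aff_dim E \<le> aff_dim {x. n F \<bullet> x = b F}" unfolding E_def by (rule aff_dim_subset) blast
  ultimately have "aff_dim E = int DIM('a) - 1" using facP_dim[OF Ff] nbf(1) by simp
  moreover have "E \<noteq> {}" using FE Ff by (auto simp: facet_of_def)
  ultimately show "(convex hull (insert v P) \<inter> {x. n F \<bullet> x = b F}) facet_of convex hull (insert v P)"
    using facQ fE E_def by blast
qed

lemma RR_face:
  assumes "F \<in> NN - FF"
  shows "\<exists>E. E facet_of convex hull (insert v P) \<and> G \<subseteq> E \<and> P \<inter> E = F \<inter> S"
proof -
  have F: "F facet_of P" "F \<noteq> S" "G \<subseteq> F" "aff_dim (F \<inter> S) = int DIM('a) - 2" "F \<notin> FF"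
    using assms unfolding NN_def by auto
  note nbf = nbF[OF F(1)] and nbs = nbF[OF Sfac]
  have lt: "n F \<bullet> v < b F" using vO F by blast
  define \<alpha> where "\<alpha> = b F - n F \<bullet> v"
  define \<beta> where "\<beta> = n S \<bullet> v - b S"
  have ab: "\<alpha> > 0" "\<beta> > 0" using lt vS unfolding \<alpha>_def \<beta>_def by auto
  define a where "a = \<alpha> *\<^sub>R n S + \<beta> *\<^sub>R n F"
  define c where "c = \<alpha> * b S + \<beta> * b F"
  have ax: "a \<bullet> x - c = \<alpha> * (n S \<bullet> x - b S) + \<beta> * (n F \<bullet> x - b F)" for x
    unfolding a_def c_def by (simp add: inner_add_left algebra_simps)
  have av: "a \<bullet> v = c"
  proof -
    have "a \<bullet> v - c = 0" unfolding ax \<alpha>_def \<beta>_def by (simp add: algebra_simps)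
    then show ?thesis by simp
  qed
  have Ple: "P \<subseteq> {x. a \<bullet> x \<le> c}"
  proof
    fix x assume "x \<in> P"
    then have "n S \<bullet> x - b S \<le> 0" "n F \<bullet> x - b F \<le> 0" using nbf(2) nbs(2) by auto
    then have "\<alpha> * (n S \<bullet> x - b S) + \<beta> * (n F \<bullet> x - b F) \<le> 0"
      using ab by (simp add: add_nonpos_nonpos mult_nonneg_nonpos)
    then show "x \<in> {x. a \<bullet> x \<le> c}" using ax[of x] by simp
  qed
  have K: "P \<inter> {x. a \<bullet> x = c} = F \<inter> S"
  proof
    show "P \<inter> {x. a \<bullet> x = c} \<subseteq> F \<inter> S"
    proof
      fix x assume x: "x \<in> P \<inter> {x. a \<bullet> x = c}"
      then have h: "n S \<bullet> x - b S \<le> 0" "n F \<bullet> x - b F \<le> 0" using nbf(2) nbs(2) by auto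
      have "\<alpha> * (n S \<bullet> x - b S) + \<beta> * (n F \<bullet> x - b F) = 0" using ax[of x] x by simp
      moreover have "\<alpha> * (n S \<bullet> x - b S) \<le> 0" "\<beta> * (n F \<bullet> x - b F) \<le> 0"
        using h ab by (simp_all add: mult_nonneg_nonpos)
      ultimately have "\<alpha> * (n S \<bullet> x - b S) = 0" "\<beta> * (n F \<bullet> x - b F) = 0" by linarith+
      then have "n S \<bullet> x = b S" "n F \<bullet> x = b F" using ab by auto
      then show "x \<in> F \<inter> S" using x nbf(3) nbs(3) by blast
    qed
  next
    show "F \<inter> S \<subseteq> P \<inter> {x. a \<bullet> x = c}"
    proof
      fix x assume x: "x \<in> F \<inter> S"
      then have "n S \<bullet> x = b S" "n F \<bullet> x = b F" "x \<in> P" using nbf(3) nbs(3) by blast+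
      then show "x \<in> P \<inter> {x. a \<bullet> x = c}" using ax[of x] by simp
    qed
  qed
  define E where "E = convex hull (insert v P) \<inter> {x. a \<bullet> x = c}"
  have Pl: "\<And>x. x \<in> P \<Longrightarrow> a \<bullet> x \<le> c" using Ple by blast
  have "E = convex hull (insert v (P \<inter> {x. a \<bullet> x = c}))" unfolding E_def by (rule seg_eq[OF convP Pne Pl av])
  then have Eeq: "E = convex hull (insert v (F \<inter> S))" using K by simp
  have fE: "E face_of convex hull (insert v P)"
    unfolding E_def by (rule face_of_Int_supporting_hyperplane_le[OF convQ]) (use Qle[OF Ple] av in force)
  have "affine hull (F \<inter> S) \<subseteq> affine hull S" by (rule hull_mono) blast
  also have "\<dots> = {x. n S \<bullet> x = b S}" using hypF[OF Sfac nbs(1) nbs(3) dimP] .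
  finally have "v \<notin> affine hull (F \<inter> S)" using vS by auto
  then have "aff_dim E = aff_dim (F \<inter> S) + 1" unfolding Eeq aff_dim_convex_hull aff_dim_insert by simp
  then have dE: "aff_dim E = int DIM('a) - 1" using F(4) by simp
  have "E \<noteq> {}" unfolding Eeq by (simp add: hull_inc ex_in_conv)
  then have "E facet_of convex hull (insert v P)" using facQ fE dE by blast
  moreover have "G \<subseteq> E"
  proof -
    have "F \<inter> S \<subseteq> convex hull (insert v (F \<inter> S))" by (meson hull_subset subset_insertI subset_trans)
    then show ?thesis unfolding Eeq using F(3) GS by blast
  qed
  moreover have "P \<inter> E = F \<inter> S" unfolding E_def by (simp only: PE K)
  ultimately show ?thesis by blast
qed

lemma classify:
  assumes E: "E facet_of convex hull (insert v P)" "G \<subseteq> E"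
  shows "(v \<notin> E \<and> E = P \<inter> E \<and> P \<inter> E \<in> AA) \<or>
         (v \<in> E \<and> E = convex hull (insert v (P \<inter> E)) \<and> P \<inter> E \<in> BB \<union> RR)"
proof -
  obtain a c where ac: "a \<noteq> 0" "convex hull (insert v P) \<subseteq> {x. a \<bullet> x \<le> c}"
      "E = convex hull (insert v P) \<inter> {x. a \<bullet> x = c}"
    using facet_of_polyhedron[OF polytope_imp_polyhedron[OF polyQ] E(1)] by metis
  define K where "K = P \<inter> {x. a \<bullet> x = c}"
  have PEK: "P \<inter> E = K" unfolding ac(3) K_def by (simp only: PE)
  have Pl: "\<And>x. x \<in> P \<Longrightarrow> a \<bullet> x \<le> c" using ac(2) PQ by blast
  have Kf: "K face_of P" unfolding K_def by (rule face_of_Int_supporting_hyperplane_le[OF convP Pl])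
  have GP: "G \<subseteq> P" using Gface face_of_imp_subset by blast
  have GK: "G \<subseteq> K" using E(2) GP PEK by blast
  have Kne: "K \<noteq> {}" using GK Gne by blast
  have av: "a \<bullet> v \<le> c" using ac(2) vQ by blast
  have dE: "aff_dim E = int DIM('a) - 1" using E(1) dimQ by (simp add: facet_of_def)
  have KH: "K \<subseteq> {x. a \<bullet> x = c}" unfolding K_def by blast
  have Psub: "P \<subseteq> {x. a \<bullet> x \<le> c}" using Pl by blast
  show ?thesis
  proof (cases "a \<bullet> v < c")
    case True
    have EK: "E = K" unfolding ac(3) K_def by (rule seg_lt[OF convP Pne Pl True])
    have vE: "v \<notin> E" using True ac(3) by auto
    have Kfac: "K facet_of P" using facP_I[OF Kf Kne] dE EK by simp
    note nbk = nbF[OF Kfac]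
    obtain t where t: "t > 0" "a = t *\<^sub>R n K" "c = t * b K"
      using scale[OF Kfac nbk(1) nbk(2) nbk(3) dimP ac(1) Psub KH] by blast
    have "t * (n K \<bullet> v) < t * b K" using True t by simp
    then have lt: "n K \<bullet> v < b K" using t(1) by simp
    have "K \<notin> FF" using vF lt by force
    moreover have "K \<noteq> S" using vS lt by force
    ultimately have "K \<in> AA" unfolding AA_def using Kfac GK by blast
    then have "P \<inter> E \<in> AA" unfolding PEK .
    moreover have "E = P \<inter> E" unfolding PEK by (rule EK)
    ultimately show ?thesis using vE by blast
  next
    case False
    then have av': "a \<bullet> v = c" using av by simp
    have EK: "E = convex hull (insert v K)" unfolding ac(3) K_def by (rule seg_eq[OF convP Pne Pl av'])
    have vE: "v \<in> E" using EK by (simp add: hull_inc)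
    have "K \<noteq> P"
    proof
      assume "K = P"
      then have "P \<subseteq> {x. a \<bullet> x = c}" using KH by blast
      then have "aff_dim P \<le> aff_dim {x. a \<bullet> x = c}" by (rule aff_dim_subset)
      then show False using dimP ac(1) by simp
    qed
    have dKlt: "aff_dim K < int DIM('a)" using face_of_aff_dim_lt[OF convP Kf \<open>K \<noteq> P\<close>] dimP by simp
    have dEK: "aff_dim E = (if v \<in> affine hull K then aff_dim K else aff_dim K + 1)"
      unfolding EK aff_dim_convex_hull aff_dim_insert ..
    show ?thesis
    proof (cases "aff_dim K = int DIM('a) - 1")
      case True
      have Kfac: "K facet_of P" using facP_I[OF Kf Kne True] .
      note nbk = nbF[OF Kfac]
      obtain t where t: "t > 0" "a = t *\<^sub>R n K" "c = t * b K"
        using scale[OF Kfac nbk(1) nbk(2) nbk(3) dimP ac(1) Psub KH] by blast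
      have "t * (n K \<bullet> v) = t * b K" using av' t by simp
      then have eqK: "n K \<bullet> v = b K" using t(1) by simp
      have "K \<in> FF"
      proof (rule ccontr)
        assume "K \<notin> FF"
        show False
        proof (cases "K = S")
          case True then show False using vS eqK by simp
        next
          case False then show False using vO[OF Kfac \<open>K \<notin> FF\<close> False] eqK by simp
        qed
      qed
      then have "K \<in> BB" unfolding BB_def using GK by blast
      then have "P \<inter> E \<in> BB \<union> RR" unfolding PEK by blast
      moreover have "E = convex hull (insert v (P \<inter> E))" unfolding PEK by (rule EK)
      ultimately show ?thesis using vE by blast
    next
      case False
      have vnot: "v \<notin> affine hull K" using dEK dE False by auto
      then have dK: "aff_dim K = int DIM('a) - 2" using dEK dE by simp
      have hyp_contra: False if "F facet_of P" "K \<subseteq> F" "n F \<bullet> v = b F" for F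
      proof -
        note nbf = nbF[OF that(1)]
        define E1 where "E1 = convex hull (insert v P) \<inter> {x. n F \<bullet> x = b F}"
        have fE1: "E1 face_of convex hull (insert v P)"
          unfolding E1_def by (rule face_of_Int_supporting_hyperplane_le[OF convQ]) (use Qle[OF nbf(2)] that(3) in force)
        have "insert v K \<subseteq> {x. n F \<bullet> x = b F}" using that(2,3) nbf(3) by blast
        then have "convex hull (insert v K) \<subseteq> {x. n F \<bullet> x = b F}"
          by (rule hull_minimal) (simp add: convex_hyperplane)
        then have EE1: "E \<subseteq> E1" unfolding E1_def using EK ac(3) by blast
        have "E1 \<noteq> convex hull (insert v P)"
        proof
          assume "E1 = convex hull (insert v P)"
          then have "P \<subseteq> {x. n F \<bullet> x = b F}" using PQ unfolding E1_def by blast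
          then have "F = P" using nbf(3) by blast
          then show False using that(1) by simp
        qed
        then have dE1: "aff_dim E1 < int DIM('a)" using face_of_aff_dim_lt[OF convQ fE1] dimQ by simp
        have "E face_of E1" using face_of_subset[OF facet_of_imp_face_of[OF E(1)] EE1 face_of_imp_subset[OF fE1]] .
        have "E = E1"
        proof (rule ccontr)
          assume "E \<noteq> E1"
          then have "aff_dim E < aff_dim E1" using face_of_aff_dim_lt[OF face_of_imp_convex[OF fE1] \<open>E face_of E1\<close>] by blast
          then show False using dE dE1 by simp
        qed
        then have "P \<inter> E = F" unfolding E1_def using nbf(3) by (simp only: PE)
        then have "K = F" using PEK by simp
        then show False using dK facP_dim[OF that(1)] by simp
      qed
      obtain F1 F2 where F12: "F1 facet_of P" "F2 facet_of P" "F1 \<noteq> F2" "K \<subseteq> F1" "K \<subseteq> F2"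
        using ridge_P[OF Kf dK Kne] by metis
      obtain r where r: "r \<in> K" using Kne by blast
      have rP: "r \<in> P" using r K_def by blast
      note sp = span_full[OF dimP rP]
      have onF: "n F \<bullet> z = b F" if "F facet_of P" "z \<in> F" for F z
      proof -
        have "z \<in> P \<inter> {x. n F \<bullet> x = b F}" using that nbF(3)[OF that(1)] by blast
        then show ?thesis by simp
      qed
      have onK: "a \<bullet> z = c" if "z \<in> K" for z using that K_def by blast
      obtain \<alpha> \<beta> where abeq: "a = \<alpha> *\<^sub>R n F1 + \<beta> *\<^sub>R n F2"
        using two_span[OF polyP Kf _ r F12(1,2,3,4,5) _ nbF(2,3)[OF F12(1)] _ nbF(2,3)[OF F12(2)], of a]
          dK dimP sp onK r by auto
      have ceq: "c = \<alpha> * b F1 + \<beta> * b F2"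
      proof -
        have "c = a \<bullet> r" using onK[OF r] by simp
        also have "\<dots> = \<alpha> * (n F1 \<bullet> r) + \<beta> * (n F2 \<bullet> r)" unfolding abeq by (simp add: inner_add_left)
        also have "\<dots> = \<alpha> * b F1 + \<beta> * b F2"
        proof -
          have "r \<in> F1" "r \<in> F2" using F12(4,5) r by blast+
          then have "n F1 \<bullet> r = b F1" "n F2 \<bullet> r = b F2" using onF[OF F12(1)] onF[OF F12(2)] by blast+
          then show ?thesis by simp
        qed
        finally show ?thesis .
      qed
      have eqx: "a \<bullet> x - c = \<alpha> * (n F1 \<bullet> x - b F1) + \<beta> * (n F2 \<bullet> x - b F2)" for x
        unfolding abeq ceq by (simp add: inner_add_left algebra_simps)
      have pos: "\<gamma> > 0" if Fs: "Fa facet_of P" "Fb facet_of P" "Fa \<noteq> Fb" "K \<subseteq> Fb"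
         and ex: "\<And>x. a \<bullet> x - c = \<gamma> * (n Fb \<bullet> x - b Fb) + \<delta> * (n Fa \<bullet> x - b Fa)" for Fa Fb \<gamma> \<delta>
      proof -
        have "\<not> Fa \<subseteq> Fb" using facet_subset_eq Fs by blast
        then obtain p where p: "p \<in> Fa" "p \<notin> Fb" by blast
        have pP: "p \<in> P" using p(1) Fs(1) facet_of_imp_subset by blast
        have "n Fb \<bullet> p \<le> b Fb" using pP nbF(2)[OF Fs(2)] by blast
        moreover have "n Fb \<bullet> p \<noteq> b Fb" using p(2) pP nbF(3)[OF Fs(2)] by blast
        ultimately have nbp: "n Fb \<bullet> p - b Fb < 0" by simp
        have "p \<notin> K" using p(2) Fs(4) by blast
        then have "a \<bullet> p \<noteq> c" using pP K_def by blast
        then have "a \<bullet> p - c < 0" using Pl[OF pP] by simp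
        moreover have "n Fa \<bullet> p - b Fa = 0" using onF[OF Fs(1) p(1)] by simp
        ultimately have "\<gamma> * (n Fb \<bullet> p - b Fb) < 0" using ex[of p] by simp
        then show "\<gamma> > 0" using nbp by (simp add: mult_less_0_iff)
      qed
      have \<beta>: "\<beta> > 0" by (rule pos[OF F12(1,2,3,5), where \<delta> = \<alpha>]) (use eqx in \<open>simp add: algebra_simps\<close>)
      have \<alpha>: "\<alpha> > 0" by (rule pos[OF F12(2,1) F12(3)[symmetric] F12(4), where \<delta> = \<beta>]) (use eqx in \<open>simp add: algebra_simps\<close>)
      have e: "\<alpha> * (n F1 \<bullet> v - b F1) + \<beta> * (n F2 \<bullet> v - b F2) = 0" using eqx[of v] av' by simp
      have le_v: "n F \<bullet> v \<le> b F" if "F facet_of P" "F \<noteq> S" for F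
        using vF vO that by (cases "F \<in> FF") (auto simp: less_imp_le)
      have "F1 = S \<or> F2 = S"
      proof (rule ccontr)
        assume "\<not> ?thesis"
        then have h: "n F1 \<bullet> v - b F1 \<le> 0" "n F2 \<bullet> v - b F2 \<le> 0" using le_v F12(1,2) by auto
        have "\<alpha> * (n F1 \<bullet> v - b F1) \<le> 0" "\<beta> * (n F2 \<bullet> v - b F2) \<le> 0"
          using h \<alpha> \<beta> by (simp_all add: mult_nonneg_nonpos)
        then have "\<alpha> * (n F1 \<bullet> v - b F1) = 0" using e by linarith
        then have "n F1 \<bullet> v = b F1" using \<alpha> by simp
        then show False using hyp_contra[OF F12(1,4)] by blast
      qed
      then obtain Fo where Fo: "Fo facet_of P" "Fo \<noteq> S" "K \<subseteq> Fo" using F12 by metis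
      have FoFF: "Fo \<notin> FF" using hyp_contra[OF Fo(1,3)] vF by blast
      have KS: "K \<subseteq> S"
        using \<open>F1 = S \<or> F2 = S\<close> F12(4,5) by blast
      have KFo: "Fo \<inter> S = K" using IL2[OF Fo(1) Sfac Fo(2) Kf] dK dimP Fo(3) KS by simp
      have "Fo \<in> NN" unfolding NN_def using Fo GK KFo dK by auto
      then have "K \<in> RR" unfolding RR_def using FoFF KFo by blast
      then have "P \<inter> E \<in> BB \<union> RR" unfolding PEK by blast
      moreover have "E = convex hull (insert v (P \<inter> E))" unfolding PEK by (rule EK)
      ultimately show ?thesis using vE by blast
    qed
  qed
qed

lemma finFacP: "finite {F. F facet_of P}"
  using finite_polytope_faces[OF polyP] by (rule finite_subset[rotated]) (auto simp: facet_of_def)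

lemma ARR_disj: "AA \<inter> (BB \<union> RR) = {}"
proof -
  have AB: "AA \<inter> BB = {}" unfolding AA_def BB_def by auto
  have dR: "aff_dim K = int DIM('a) - 2" if "K \<in> RR" for K
    using that unfolding RR_def NN_def by auto
  have dA: "aff_dim K = int DIM('a) - 1" if "K \<in> AA" for K
    using that facP_dim unfolding AA_def by auto
  have "AA \<inter> RR = {}"
  proof (rule ccontr)
    assume "AA \<inter> RR \<noteq> {}"
    then obtain K where "K \<in> AA" "K \<in> RR" by blast
    then show False using dR dA by force
  qed
  then show ?thesis using AB by blast
qed

lemma cl_mem:
  assumes "E facet_of convex hull (insert v P)" "G \<subseteq> E"
  shows "P \<inter> E \<in> AA \<union> BB \<union> RR"
  using classify[OF assms]
proof (elim disjE conjE)
  assume "P \<inter> E \<in> AA" then show ?thesis by (rule UnI1[OF UnI1])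
next
  assume "P \<inter> E \<in> BB \<union> RR" then show ?thesis by blast
qed

lemma cl_A:
  assumes "E facet_of convex hull (insert v P)" "G \<subseteq> E" "P \<inter> E \<in> AA"
  shows "E = P \<inter> E"
  using classify[OF assms(1,2)]
proof (elim disjE conjE)
  assume "E = P \<inter> E" then show ?thesis .
next
  assume "P \<inter> E \<in> BB \<union> RR" then show ?thesis using assms(3) ARR_disj by blast
qed

lemma cl_nA:
  assumes "E facet_of convex hull (insert v P)" "G \<subseteq> E" "P \<inter> E \<notin> AA"
  shows "E = convex hull (insert v (P \<inter> E))"
  using classify[OF assms(1,2)]
proof (elim disjE conjE)
  assume "P \<inter> E \<in> AA" then show ?thesis using assms(3) by blast
next
  assume "E = convex hull (insert v (P \<inter> E))" then show ?thesis .
qed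

lemma counts:
  "card {E. E facet_of convex hull (insert v P) \<and> G \<subseteq> E} = card AA + card BB + card (NN - FF)"
  "card {F. F facet_of P \<and> G \<subseteq> F} = card AA + card BB + 1"
  "card BB + card (NN - FF) = 2"
proof -
  have finA: "finite AA" using finFacP unfolding AA_def by (rule finite_subset[rotated]) auto
  have finB: "finite BB"
  proof (rule finite_subset[OF _ finFacP])
    show "BB \<subseteq> {F. F facet_of P}" unfolding BB_def using FFfac by blast
  qed
  have finN: "finite NN" using finFacP unfolding NN_def by (rule finite_subset[rotated]) auto
  have finR: "finite RR" unfolding RR_def using finN by simp
  have AB: "AA \<inter> BB = {}" unfolding AA_def BB_def by auto
  have dR: "aff_dim K = int DIM('a) - 2" if "K \<in> RR" for K
    using that unfolding RR_def NN_def by auto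
  have dAB: "aff_dim K = int DIM('a) - 1" if "K \<in> AA \<union> BB" for K
    using that FFfac facP_dim unfolding AA_def BB_def by auto
  have ABR: "(AA \<union> BB) \<inter> RR = {}"
  proof (rule ccontr)
    assume "(AA \<union> BB) \<inter> RR \<noteq> {}"
    then obtain K where "K \<in> AA \<union> BB" "K \<in> RR" by blast
    then show False using dR dAB by force
  qed
  have ARR: "AA \<inter> (BB \<union> RR) = {}" using AB ABR by blast
  define FQ where "FQ = {E. E facet_of convex hull (insert v P) \<and> G \<subseteq> E}"
  have inj: "inj_on (\<lambda>E. P \<inter> E) FQ"
  proof
    fix E1 E2 assume E: "E1 \<in> FQ" "E2 \<in> FQ" "P \<inter> E1 = P \<inter> E2"
    have E1: "E1 facet_of convex hull (insert v P)" "G \<subseteq> E1" using E(1) unfolding FQ_def by auto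
    have E2: "E2 facet_of convex hull (insert v P)" "G \<subseteq> E2" using E(2) unfolding FQ_def by auto
    show "E1 = E2"
    proof (cases "P \<inter> E1 \<in> AA")
      case True
      then have T2: "P \<inter> E2 \<in> AA" using E(3) by simp
      have "E1 = P \<inter> E1" by (rule cl_A[OF E1 True])
      also have "\<dots> = P \<inter> E2" by (rule E(3))
      also have "\<dots> = E2" by (rule cl_A[OF E2 T2, symmetric])
      finally show ?thesis .
    next
      case False
      then have T2: "P \<inter> E2 \<notin> AA" using E(3) by simp
      have "E1 = convex hull (insert v (P \<inter> E1))" by (rule cl_nA[OF E1 False])
      also have "\<dots> = convex hull (insert v (P \<inter> E2))" by (simp only: E(3))
      also have "\<dots> = E2" by (rule cl_nA[OF E2 T2, symmetric])
      finally show ?thesis .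
    qed
  qed
  have img: "(\<lambda>E. P \<inter> E) ` FQ = AA \<union> BB \<union> RR"
  proof
    show "(\<lambda>E. P \<inter> E) ` FQ \<subseteq> AA \<union> BB \<union> RR"
    proof (rule image_subsetI)
      fix E assume "E \<in> FQ"
      then have E: "E facet_of convex hull (insert v P)" "G \<subseteq> E" unfolding FQ_def by auto
      show "P \<inter> E \<in> AA \<union> BB \<union> RR" by (rule cl_mem[OF E])
    qed
  next
    show "AA \<union> BB \<union> RR \<subseteq> (\<lambda>E. P \<inter> E) ` FQ"
    proof
      fix K assume K: "K \<in> AA \<union> BB \<union> RR"
      show "K \<in> (\<lambda>E. P \<inter> E) ` FQ"
      proof (cases "K \<in> AA")
        case True
        have "K facet_of convex hull (insert v P)" using AA_face(2)[OF True] .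
        moreover have "G \<subseteq> K" "K \<subseteq> P" using True unfolding AA_def by (auto dest: facet_of_imp_subset)
        ultimately have "K \<in> FQ" "P \<inter> K = K" unfolding FQ_def by auto
        then show ?thesis by (metis image_eqI)
      next
        case False
        show ?thesis
        proof (cases "K \<in> BB")
          case True
          note bf = BB_face[OF True]
          have "convex hull (insert v P) \<inter> {x. n K \<bullet> x = b K} \<in> FQ" unfolding FQ_def using bf(1,2) by blast
          then show ?thesis using bf(3) by (metis image_eqI)
        next
          case False
          then have "K \<in> RR" using K \<open>K \<notin> AA\<close> by blast
          then obtain F where F: "F \<in> NN - FF" "K = F \<inter> S" unfolding RR_def by blast
          obtain E where "E facet_of convex hull (insert v P)" "G \<subseteq> E" "P \<inter> E = F \<inter> S"
            using RR_face[OF F(1)] by blast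
          then show ?thesis using F(2) unfolding FQ_def by (metis (mono_tags, lifting) image_eqI mem_Collect_eq)
        qed
      qed
    qed
  qed
  have cRR: "card RR = card (NN - FF)"
    unfolding RR_def by (rule card_image) (use NN_props(2) in \<open>blast intro: inj_on_subset\<close>)
  have "card FQ = card (AA \<union> BB \<union> RR)" using card_image[OF inj] img by simp
  also have "\<dots> = card AA + card BB + card RR"
    using card_Un_disjoint[OF finA finB AB] card_Un_disjoint[of "AA \<union> BB" RR] finA finB finR ABR by simp
  finally show "card {E. E facet_of convex hull (insert v P) \<and> G \<subseteq> E} = card AA + card BB + card (NN - FF)"
    using cRR unfolding FQ_def by simp
  have "{F. F facet_of P \<and> G \<subseteq> F} = insert S (AA \<union> BB)"
    unfolding AA_def BB_def using Sfac GS FFfac by auto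
  moreover have "S \<notin> AA \<union> BB" unfolding AA_def BB_def using FFfac by auto
  ultimately show "card {F. F facet_of P \<and> G \<subseteq> F} = card AA + card BB + 1"
    using finA finB AB by (simp add: card_Un_disjoint)
  have "NN = (NN - FF) \<union> BB" using NN_props(3) unfolding NN_def BB_def by auto
  moreover have "(NN - FF) \<inter> BB = {}" unfolding BB_def by auto
  ultimately have "card NN = card (NN - FF) + card BB"
    using finN finB card_Un_disjoint[of "NN - FF" BB] by (metis finite_Diff)
  then show "card BB + card (NN - FF) = 2" using NN_props(1) by simp
qed

end

theorem proposition2p17:
  fixes P S G :: "'a::euclidean_space set" and \<F> :: "'a set set" and v :: 'a
  assumes "DIM('a) \<ge> 3"
    and "d_polytope P"
    and "simplex_facet P S"
    and "bounded_position P S"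
    and "\<F> \<subseteq> adj P S"
    and "nonsimple P S \<F>"
    and "G face_of P" and "aff_dim G = int DIM('a) - 3" and "G \<subseteq> S"
    and "v \<in> VS S \<F> {} P"
  shows "0 \<le> card {F\<in>\<F>. G \<subseteq> F} \<and> card {F\<in>\<F>. G \<subseteq> F} \<le> 2
       \<and> G face_of convex hull (insert v P)
       \<and> int (fdeg (convex hull (insert v P)) G)
           = int (fdeg P G) + 1 - int (card {F\<in>\<F>. G \<subseteq> F})"
proof -
  have polyP: "polytope P" and dimP: "aff_dim P = int DIM('a)" using assms(2) unfolding d_polytope_def by auto
  have Sfac: "S facet_of P" using assms(3) unfolding simplex_facet_def by blast
  have "\<forall>F. \<exists>p. F facet_of P \<longrightarrow> (fst p \<noteq> 0 \<and> P \<subseteq> {x. fst p \<bullet> x \<le> snd p} \<and> F = P \<inter> {x. fst p \<bullet> x = snd p})"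
  proof
    fix F
    show "\<exists>p. F facet_of P \<longrightarrow> (fst p \<noteq> 0 \<and> P \<subseteq> {x. fst p \<bullet> x \<le> snd p} \<and> F = P \<inter> {x. fst p \<bullet> x = snd p})"
    proof (cases "F facet_of P")
      case True
      obtain a c where "a \<noteq> 0" "P \<subseteq> {x. a \<bullet> x \<le> c}" "F = P \<inter> {x. a \<bullet> x = c}"
        using facet_of_polyhedron[OF polytope_imp_polyhedron[OF polyP] True] by metis
      then show ?thesis by (intro exI[of _ "(a,c)"]) simp
    qed simp
  qed
  then obtain f where f: "\<forall>F. F facet_of P \<longrightarrow> (fst (f F) \<noteq> 0 \<and> P \<subseteq> {x. fst (f F) \<bullet> x \<le> snd (f F)} \<and> F = P \<inter> {x. fst (f F) \<bullet> x = snd (f F)})"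
    by (rule choice[THEN exE]) blast
  define n where "n F = fst (f F)" for F
  define b where "b F = snd (f F)" for F
  have nb: "\<And>F. F facet_of P \<Longrightarrow> n F \<noteq> 0 \<and> P \<subseteq> {x. n F \<bullet> x \<le> b F} \<and> F = P \<inter> {x. n F \<bullet> x = b F}"
    using f unfolding n_def b_def by auto
  have vm1: "v \<in> hminus P S" using assms(10) unfolding VS_def by auto
  have vm2: "\<And>F. F \<in> \<F> \<Longrightarrow> v \<in> hyp F" using assms(10) unfolding VS_def by auto
  have vm3: "\<And>F. F facet_of P \<Longrightarrow> F \<notin> \<F> \<Longrightarrow> F \<noteq> S \<Longrightarrow> v \<in> hplus P F"
    using assms(10) unfolding VS_def by auto
  have FFfac: "F facet_of P" if "F \<in> \<F>" for F using assms(5) that unfolding adj_def adjacent_def by auto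
  have vS: "n S \<bullet> v > b S"
    using hminus_gt[OF Sfac _ _ _ dimP vm1] nb[OF Sfac] by blast
  have vF: "n F \<bullet> v = b F" if "F \<in> \<F>" for F
  proof -
    have h: "hyp F = {x. n F \<bullet> x = b F}"
      unfolding hyp_def using hypF[OF FFfac[OF that] _ _ dimP] nb[OF FFfac[OF that]] by blast
    show ?thesis using vm2[OF that] unfolding h by simp
  qed
  have vO: "n F \<bullet> v < b F" if "F facet_of P" "F \<notin> \<F>" "F \<noteq> S" for F
    using hplus_lt[OF that(1) _ _ _ dimP vm3[OF that]] nb[OF that(1)] by blast
  interpret st: setting P S G \<F> v n b
  proof
    show "3 \<le> DIM('a)" by (rule assms(1))
  qed (fact polyP dimP Sfac assms(5) assms(6) assms(7) assms(8) assms(9) vS vF vO nb)+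
  have cB: "card {F\<in>\<F>. G \<subseteq> F} = card st.BB" by (simp add: st.BB_def)
  have c1: "fdeg (convex hull (insert v P)) G = card st.AA + card st.BB + card (st.NN - \<F>)"
    unfolding fdeg_def by (rule st.counts(1))
  have c2: "fdeg P G = card st.AA + card st.BB + 1"
    unfolding fdeg_def by (rule st.counts(2))
  have c3: "card st.BB + card (st.NN - \<F>) = 2" by (rule st.counts(3))
  have "card {F\<in>\<F>. G \<subseteq> F} \<le> 2" using cB c3 by linarith
  moreover have "int (fdeg (convex hull (insert v P)) G) = int (fdeg P G) + 1 - int (card {F\<in>\<F>. G \<subseteq> F})"
    using c1 c2 c3 cB by simp
  ultimately show ?thesis using st.G_face_Q by simp
qed

end
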